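(* Let $\omega\in\Omega_+$ satisfy \[\liminf_{i\to\infty}\frac1i\sum_{y=-i}^{0}(2\omega(y,1)-1)>0.\] Then for all $x,k\in\mathbb Z$ with $k\ge x$, $E_{x,\omega}[D_{T_k}]=k-x$.
   Context: Cookie environments: $\Omega_+=([1/2,1]^{\mathbb N})^{\mathbb Z}$, $\omega=(\omega(z,i))_{z\in\mathbb Z,i\ge1}$. $P_{x,\omega}$ is the law of the nearest-neighbor process $(X_n)_{n\ge0}$ with $X_0=x$ which, on its $i$-th visit to site $z$, jumps to $z+1$ with probability $\omega(z,i)$ and to $z-1$ otherwise (independently of everything else given the history); $E_{x,\omega}$ its expectation. $T_k=\inf\{n\ge0:X_n=k\}$. For a site $z$ and time $n$, $D_n^z=\sum_{i=1}^{\#\{m<n: X_m=z\}}(2\omega(z,i)-1)$ (drift of cookies eaten at $z$ before time $n$); $D_n^+=\sum_{z\ge0}D_n^z$, $D_n^-=\sum_{z<0}D_n^z$, $D_n=D_n^++D_n^-$. *)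

theory Defs
  imports "HOL-Probability.Probability"
begin

text \<open>A cookie environment: omega z i is the cookie strength of the i-th cookie
  at site z (only i \<ge> 1 is relevant).\<close>
type_synonym env = "int \<Rightarrow> nat \<Rightarrow> real"

definition Omega_plus :: "env set" where
  "Omega_plus = {\<omega>. \<forall>z i. i \<ge> 1 \<longrightarrow> 1/2 \<le> \<omega> z i \<and> \<omega> z i \<le> 1}"

text \<open>Canonical construction of the excited random walk from i.i.d. uniform
  variables u 0, u 1, ...: the history [X_0, ..., X_n].\<close>
fun hist :: "env \<Rightarrow> int \<Rightarrow> (nat \<Rightarrow> real) \<Rightarrow> nat \<Rightarrow> int list" where
  "hist \<omega> x u 0 = [x]"
| "hist \<omega> x u (Suc n) =
     (let h = hist \<omega> x u n; z = last h; i = count_list h z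
      in h @ [if u n < \<omega> z i then z + 1 else z - 1])"

definition walk :: "env \<Rightarrow> int \<Rightarrow> (nat \<Rightarrow> real) \<Rightarrow> nat \<Rightarrow> int" where
  "walk \<omega> x u n = last (hist \<omega> x u n)"

definition unif_seq :: "(nat \<Rightarrow> real) measure" where
  "unif_seq = PiM UNIV (\<lambda>_. uniform_measure lborel {0..1})"

definition Dz :: "env \<Rightarrow> int \<Rightarrow> (nat \<Rightarrow> real) \<Rightarrow> nat \<Rightarrow> int \<Rightarrow> real" where
  "Dz \<omega> x u n z = (\<Sum>i\<in>{1..card {m. m < n \<and> walk \<omega> x u m = z}}. 2 * \<omega> z i - 1)"

definition D :: "env \<Rightarrow> int \<Rightarrow> (nat \<Rightarrow> real) \<Rightarrow> nat \<Rightarrow> real" where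
  "D \<omega> x u n = (\<Sum>z\<in>walk \<omega> x u ` {..<n}. Dz \<omega> x u n z)"

definition hit :: "env \<Rightarrow> int \<Rightarrow> (nat \<Rightarrow> real) \<Rightarrow> int \<Rightarrow> enat" where
  "hit \<omega> x u k = (if \<exists>n. walk \<omega> x u n = k then enat (LEAST n. walk \<omega> x u n = k) else \<infinity>)"

text \<open>D_{T_k}; on the (null) event T_k = infinity we use the limit of D_n.\<close>
definition D_at_hit :: "env \<Rightarrow> int \<Rightarrow> (nat \<Rightarrow> real) \<Rightarrow> int \<Rightarrow> ennreal" where
  "D_at_hit \<omega> x u k = (case hit \<omega> x u k of
       enat n \<Rightarrow> ennreal (D \<omega> x u n)
     | \<infinity> \<Rightarrow> (SUP n. ennreal (D \<omega> x u n)))"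

end

theory Submission
  imports Defs
begin


definition M0 :: "real measure" where "M0 = uniform_measure lborel {0..1::real}"

lemma prob_M0: "prob_space M0"
  unfolding M0_def by (rule prob_space_uniform_measure) auto

lemma unif_seq_eq: "unif_seq = PiM UNIV (\<lambda>_. M0)"
  unfolding unif_seq_def M0_def ..

lemma prob_P: "prob_space unif_seq"
  unfolding unif_seq_eq by (rule prob_space_PiM) (rule prob_M0)

lemma sets_M0[simp]: "sets M0 = sets borel"
  unfolding M0_def by simp

lemma space_M0[simp]: "space M0 = UNIV"
  unfolding M0_def by simp

lemma ennreal_div1[simp]: "(a::ennreal) / 1 = a"
  by (simp add: divide_ennreal_def)

lemma comp_meas[measurable]: "(\<lambda>w. w n) \<in> borel_measurable (PiM UNIV (\<lambda>_. M0))"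
proof -
  have "(\<lambda>w. w n) \<in> measurable (PiM UNIV (\<lambda>_. M0)) M0" by (rule measurable_component_singleton) simp
  then show ?thesis by (simp add: measurable_cong_sets[OF refl sets_M0])
qed

lemma emeasure_M0_less: "0 \<le> a \<Longrightarrow> a \<le> 1 \<Longrightarrow> emeasure M0 {..<a} = ennreal a"
proof -
  assume a: "0 \<le> a" "a \<le> 1"
  have "{0..1} \<inter> {..<a} = {0..<a}" using a by auto
  then show ?thesis unfolding M0_def using a by (simp add: emeasure_uniform_measure)
qed

lemma emeasure_M0_ge: "0 \<le> a \<Longrightarrow> a \<le> 1 \<Longrightarrow> emeasure M0 {a..} = ennreal (1 - a)"
proof -
  assume a: "0 \<le> a" "a \<le> 1"
  have "{0..1} \<inter> {a..} = {a..1}" using a by auto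
  then show ?thesis unfolding M0_def using a by (simp add: emeasure_uniform_measure)
qed

lemma hist_ne[simp]: "hist \<omega> x u n \<noteq> []"
  by (induction n) (auto simp: Let_def)

lemma length_hist[simp]: "length (hist \<omega> x u n) = Suc n"
  by (induction n) (auto simp: Let_def)

lemma hist_local: "(\<And>m. m < n \<Longrightarrow> u m = v m) \<Longrightarrow> hist \<omega> x u n = hist \<omega> x v n"
  by (induction n) (auto simp: Let_def)

lemma hist_meas: "(\<lambda>u. hist \<omega> x u n) \<in> measurable unif_seq (count_space UNIV)"
proof (induction n)
  case 0 show ?case by simp
next
  case (Suc n)
  let ?f = "\<lambda>h u. if u n < \<omega> (last h) (count_list h (last h)) then h @ [last h + 1] else h @ [last h - 1]"
  have eq: "(\<lambda>u. hist \<omega> x u (Suc n)) = (\<lambda>u. ?f (hist \<omega> x u n) u)"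
    by (auto simp: Let_def fun_eq_iff)
  have "(\<lambda>u. ?f h u) \<in> measurable unif_seq (count_space UNIV)" for h
    unfolding unif_seq_eq by measurable
  then show ?case unfolding eq
    by (rule measurable_compose_countable'[OF _ Suc]) auto
qed

lemma hist_fun_meas[measurable]: "(\<lambda>u. G (hist \<omega> x u n)) \<in> borel_measurable unif_seq"
  using hist_meas by (rule measurable_compose) simp

definition stepp :: "env \<Rightarrow> int list \<Rightarrow> real" where
  "stepp \<omega> h = \<omega> (last h) (count_list h (last h))"

lemma hist_Suc_upd:
  "hist \<omega> x (X(n := t)) (Suc n) = (let h = hist \<omega> x X n in
     h @ [if t < stepp \<omega> h then last h + 1 else last h - 1])"
proof -
  have "hist \<omega> x (X(n := t)) n = hist \<omega> x X n" by (rule hist_local) auto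
  then show ?thesis by (simp add: Let_def stepp_def)
qed

lemma inner_step:
  assumes "0 \<le> a" "a \<le> 1"
  shows "(\<integral>\<^sup>+ t. G (if t < a then p else q) \<partial>M0) = ennreal a * G p + ennreal (1 - a) * G q"
proof -
  have "(\<integral>\<^sup>+ t. G (if t < a then p else q) \<partial>M0) =
     (\<integral>\<^sup>+ t. G p * indicator {..<a} t + G q * indicator {a..} t \<partial>M0)"
    by (rule nn_integral_cong) (auto simp: indicator_def not_less)
  also have "\<dots> = (\<integral>\<^sup>+ t. G p * indicator {..<a} t \<partial>M0) + (\<integral>\<^sup>+ t. G q * indicator {a..} t \<partial>M0)"
  proof (rule nn_integral_add)
    have "(\<lambda>t. G p * indicator {..<a} t) \<in> borel_measurable borel" by measurable
    then show "(\<lambda>t. G p * indicator {..<a} t) \<in> borel_measurable M0"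
      using measurable_cong_sets[OF sets_M0 refl] by blast
    have "(\<lambda>t. G q * indicator {a..} t) \<in> borel_measurable borel" by measurable
    then show "(\<lambda>t. G q * indicator {a..} t) \<in> borel_measurable M0"
      using measurable_cong_sets[OF sets_M0 refl] by blast
  qed
  also have "\<dots> = G p * emeasure M0 {..<a} + G q * emeasure M0 {a..}"
    by (simp only: nn_integral_cmult_indicator sets_M0 atLeast_borel lessThan_borel)
  also have "\<dots> = ennreal a * G p + ennreal (1 - a) * G q"
    using assms by (simp only: emeasure_M0_less emeasure_M0_ge mult.commute)
  finally show ?thesis .
qed

lemma upd_meas: "(\<lambda>(t, X::nat \<Rightarrow> real). X(n := t)) \<in> measurable (M0 \<Otimes>\<^sub>M PiM UNIV (\<lambda>_. M0)) (PiM UNIV (\<lambda>_. M0))"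
proof -
  have e: "(\<lambda>(t, X). X(n := t)) = (\<lambda>p::real \<times> (nat \<Rightarrow> real). (snd p)(n := fst p))" by auto
  show ?thesis unfolding e
    by (rule measurable_fun_upd[where J=UNIV, OF _ measurable_snd measurable_fst]) simp
qed

lemma one_step:
  assumes a: "\<And>u. 0 \<le> stepp \<omega> (hist \<omega> x u n) \<and> stepp \<omega> (hist \<omega> x u n) \<le> 1"
  shows "(\<integral>\<^sup>+ u. G (hist \<omega> x u (Suc n)) \<partial>unif_seq) =
    (\<integral>\<^sup>+ u. ennreal (stepp \<omega> (hist \<omega> x u n)) * G (hist \<omega> x u n @ [last (hist \<omega> x u n) + 1])
       + ennreal (1 - stepp \<omega> (hist \<omega> x u n)) * G (hist \<omega> x u n @ [last (hist \<omega> x u n) - 1]) \<partial>unif_seq)"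
proof -
  let ?P = "PiM UNIV (\<lambda>_::nat. M0)"
  interpret M0: prob_space M0 by (rule prob_M0)
  interpret PP: prob_space ?P using prob_P unfolding unif_seq_eq .
  interpret pair_sigma_finite M0 ?P by unfold_locales
  have D: "distr (M0 \<Otimes>\<^sub>M ?P) ?P (\<lambda>(t, X). X(n := t)) = ?P"
    using distr_pair_PiM_eq_PiM[of UNIV "\<lambda>_. M0" n] prob_M0 by simp
  have Gm: "(\<lambda>u. G (hist \<omega> x u (Suc n))) \<in> borel_measurable ?P"
    using hist_fun_meas unfolding unif_seq_eq .
  have "(\<integral>\<^sup>+ u. G (hist \<omega> x u (Suc n)) \<partial>unif_seq) =
        (\<integral>\<^sup>+ u. G (hist \<omega> x u (Suc n)) \<partial>distr (M0 \<Otimes>\<^sub>M ?P) ?P (\<lambda>(t, X). X(n := t)))"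
    unfolding D unif_seq_eq ..
  also have "\<dots> = (\<integral>\<^sup>+ p. G (hist \<omega> x ((\<lambda>(t, X). X(n := t)) p) (Suc n)) \<partial>(M0 \<Otimes>\<^sub>M ?P))"
    by (rule nn_integral_distr[OF upd_meas]) (simp only: measurable_distr_eq1 Gm)
  also have "\<dots> = (\<integral>\<^sup>+ X. \<integral>\<^sup>+ t. G (hist \<omega> x (X(n := t)) (Suc n)) \<partial>M0 \<partial>?P)"
  proof -
    have Fm: "(\<lambda>p. G (hist \<omega> x ((\<lambda>(t, X::nat\<Rightarrow>real). X(n := t)) p) (Suc n))) \<in> borel_measurable (M0 \<Otimes>\<^sub>M ?P)"
      by (rule measurable_compose[OF upd_meas Gm])
    show ?thesis using nn_integral_snd[OF Fm] by simp
  qed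
  also have "\<dots> = (\<integral>\<^sup>+ X. ennreal (stepp \<omega> (hist \<omega> x X n)) * G (hist \<omega> x X n @ [last (hist \<omega> x X n) + 1])
       + ennreal (1 - stepp \<omega> (hist \<omega> x X n)) * G (hist \<omega> x X n @ [last (hist \<omega> x X n) - 1]) \<partial>?P)"
    apply (rule nn_integral_cong)
    apply (simp only: hist_Suc_upd Let_def)
    apply (rule inner_step[where G="\<lambda>y. G (_ @ [y])"])
    using a by auto
  finally show ?thesis unfolding unif_seq_eq .
qed



fun tu :: "(int \<Rightarrow> bool) \<Rightarrow> int list \<Rightarrow> int list" where
  "tu B [] = []"
| "tu B (y # ys) = (if B y then [y] else y # tu B ys)"

lemma tu_snoc: "tu B (h @ [y]) = (if \<exists>z\<in>set h. B z then tu B h else h @ [y])"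
  by (induction h) auto

lemma tu_noB: "\<not>(\<exists>z\<in>set h. B z) \<Longrightarrow> tu B h = h"
  by (induction h) auto

lemma tu_ne: "h \<noteq> [] \<Longrightarrow> tu B h \<noteq> []"
  by (cases h) auto

lemma tu_hd: "h \<noteq> [] \<Longrightarrow> hd (tu B h) = hd h"
  by (cases h) auto

lemma tu_butlast: "z \<in> set (butlast (tu B h)) \<Longrightarrow> \<not> B z"
proof (induction h)
  case Nil then show ?case by simp
next
  case (Cons y ys)
  show ?case
  proof (cases "B y")
    case True then show ?thesis using Cons by simp
  next
    case False
    then have "tu B (y # ys) = y # tu B ys" by simp
    then show ?thesis using Cons False by (cases "tu B ys = []") auto
  qed
qed

lemma tu_last: "tu B h \<noteq> h \<Longrightarrow> B (last (tu B h))"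
proof (induction h)
  case Nil then show ?case by simp
next
  case (Cons y ys)
  show ?case
  proof (cases "B y")
    case True then show ?thesis by simp
  next
    case False
    then have e: "tu B (y # ys) = y # tu B ys" by simp
    with Cons.prems have ne: "tu B ys \<noteq> ys" by simp
    then have "tu B ys \<noteq> []" using tu_ne by (cases ys) auto
    with Cons.IH[OF ne] e show ?thesis by simp
  qed
qed

lemma tu_mono: "(\<And>y. B1 y \<Longrightarrow> B2 y) \<Longrightarrow> \<exists>r. tu B1 h = tu B2 h @ r"
proof (induction h)
  case Nil then show ?case by simp
next
  case (Cons y ys)
  then obtain r where r: "tu B1 ys = tu B2 ys @ r" by blast
  show ?case
  proof (cases "B2 y")
    case True then show ?thesis by (cases "B1 y") auto
  next
    case False
    then have "\<not> B1 y" using Cons.prems by blast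
    with False r show ?thesis by auto
  qed
qed

definition reach :: "env \<Rightarrow> int \<Rightarrow> int list \<Rightarrow> bool" where
  "reach \<omega> x h \<longleftrightarrow> (\<exists>n u. h = hist \<omega> x u n)"

lemma hist_Suc': "hist \<omega> x u (Suc n) = hist \<omega> x u n @
   [if u n < stepp \<omega> (hist \<omega> x u n) then last (hist \<omega> x u n) + 1 else last (hist \<omega> x u n) - 1]"
  by (simp add: Let_def stepp_def)

lemma stepp_bounds:
  assumes "\<omega> \<in> Omega_plus" "h \<noteq> []"
  shows "1/2 \<le> stepp \<omega> h \<and> stepp \<omega> h \<le> 1"
proof -
  have "last h \<in> set h" using assms(2) by simp
  then have "count_list h (last h) \<noteq> 0" by (simp add: count_list_0_iff)
  then have "1 \<le> count_list h (last h)" by simp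
  then show ?thesis using assms(1) unfolding Omega_plus_def stepp_def by blast
qed

lemma reach_hist: "reach \<omega> x (hist \<omega> x u n)"
  unfolding reach_def by blast

lemma reach_step:
  assumes "\<omega> \<in> Omega_plus" "reach \<omega> x h"
  shows "reach \<omega> x (h @ [last h + 1])" "reach \<omega> x (h @ [last h - 1])"
proof -
  obtain n u where h: "h = hist \<omega> x u n" using assms(2) unfolding reach_def by blast
  have a: "1/2 \<le> stepp \<omega> h \<and> stepp \<omega> h \<le> 1" using stepp_bounds[OF assms(1)] h by simp
  have loc: "hist \<omega> x (u(n := t)) n = h" for t unfolding h by (rule hist_local) auto
  have "hist \<omega> x (u(n := 0)) (Suc n) = h @ [last h + 1]"
    unfolding hist_Suc' loc using a by simp
  then show "reach \<omega> x (h @ [last h + 1])" unfolding reach_def by metis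
  have "hist \<omega> x (u(n := 1)) (Suc n) = h @ [last h - 1]"
    unfolding hist_Suc' loc using a by simp
  then show "reach \<omega> x (h @ [last h - 1])" unfolding reach_def by metis
qed

lemma reach_tu_hist: "reach \<omega> x (tu B (hist \<omega> x u n))"
proof (induction n)
  case 0 then show ?case using reach_hist[of \<omega> x u 0] by simp
next
  case (Suc n)
  then show ?case unfolding hist_Suc'[of \<omega> x u n] tu_snoc
    using reach_hist[of \<omega> x u "Suc n"] hist_Suc'[of \<omega> x u n] by auto
qed

lemma reach_tu: "reach \<omega> x h \<Longrightarrow> reach \<omega> x (tu B h)"
  unfolding reach_def using reach_tu_hist unfolding reach_def by blast

lemma hd_hist: "hd (hist \<omega> x u n) = x"
  by (induction n) (auto simp: Let_def)

lemma reach_ne: "reach \<omega> x h \<Longrightarrow> h \<noteq> [] \<and> hd h = x"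
  unfolding reach_def using hd_hist by auto

definition Lp :: "int list \<Rightarrow> int" where
  "Lp h = Min (insert (hd h + 1) (set (butlast h)))"

lemma Lp_snoc: "h \<noteq> [] \<Longrightarrow> Lp (h @ [y]) = min (Lp h) (last h)"
proof -
  assume ne: "h \<noteq> []"
  have s: "set h = insert (last h) (set (butlast h))"
    using append_butlast_last_id[OF ne] by (metis Un_insert_right append_Nil2 list.simps(15) set_append)
  have "Lp (h @ [y]) = Min (insert (hd h + 1) (set h))" unfolding Lp_def using ne by simp
  also have "\<dots> = Min (insert (last h) (insert (hd h + 1) (set (butlast h))))"
    unfolding s by (simp add: insert_commute)
  also have "\<dots> = min (last h) (Lp h)" unfolding Lp_def by (simp add: Min_insert)
  finally show ?thesis by simp
qed

lemma Lp_le: "z \<in> set (butlast h) \<Longrightarrow> Lp h \<le> z"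
  unfolding Lp_def by simp

lemma Lp_le_hd: "Lp h \<le> hd h + 1"
  unfolding Lp_def by simp

lemma Lp_ge: "(\<And>z. z \<in> set (butlast h) \<Longrightarrow> c \<le> z) \<Longrightarrow> c \<le> hd h + 1 \<Longrightarrow> c \<le> Lp h"
  unfolding Lp_def by simp

lemma Lp_hist: "Lp (hist \<omega> x u n) - 1 \<le> last (hist \<omega> x u n)"
proof (induction n)
  case 0 then show ?case by (simp add: Lp_def)
next
  case (Suc n)
  then show ?case unfolding hist_Suc'[of \<omega> x u n] by (auto simp: Lp_snoc min_def)
qed

lemma reach_Lp: "reach \<omega> x h \<Longrightarrow> Lp h - 1 \<le> last h"
  unfolding reach_def using Lp_hist by blast

lemma k_hist: "x \<le> k \<Longrightarrow> k \<notin> set (hist \<omega> x u n) \<Longrightarrow> last (hist \<omega> x u n) < k"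
proof (induction n)
  case 0 then show ?case by simp
next
  case (Suc n)
  then show ?case unfolding hist_Suc'[of \<omega> x u n] by auto
qed

lemma reach_k: "x \<le> k \<Longrightarrow> reach \<omega> x h \<Longrightarrow> k \<notin> set h \<Longrightarrow> last h < k"
  unfolding reach_def using k_hist by blast



lemma sites_times:
  fixes f :: "nat \<Rightarrow> int" and g :: "int \<Rightarrow> nat \<Rightarrow> real"
  shows "(\<Sum>z\<in>f ` {..<n}. \<Sum>i\<in>{1..card {m. m < n \<and> f m = z}}. g z i) =
         (\<Sum>m<n. g (f m) (card {j. j \<le> m \<and> f j = f m}))"
proof (induction n)
  case 0 show ?case by simp
next
  case (Suc n)
  define c where "c = (\<lambda>n z. card {m. m < n \<and> f m = z})"
  have c: "c (Suc n) z = c n z + (if f n = z then 1 else 0)" for z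
  proof -
    have e: "{m. m < Suc n \<and> f m = z} = {m. m < n \<and> f m = z} \<union> (if f n = z then {n} else {})" by (auto simp: less_Suc_eq)
    show ?thesis unfolding c_def e by (subst card_Un_disjoint) (auto simp: less_Suc_eq)
  qed
  have cn: "c n (f n) + 1 = card {j. j \<le> n \<and> f j = f n}"
  proof -
    have e: "{j. j \<le> n \<and> f j = f n} = insert n {m. m < n \<and> f m = f n}" by auto
    show ?thesis unfolding c_def e by simp
  qed
  have "(\<Sum>z\<in>f ` {..<Suc n}. \<Sum>i\<in>{1..c (Suc n) z}. g z i) =
        (\<Sum>z\<in>f ` {..<Suc n}. (\<Sum>i\<in>{1..c n z}. g z i) + (if f n = z then g z (c n z + 1) else 0))"
    by (rule sum.cong) (auto simp: c)
  also have "\<dots> = (\<Sum>z\<in>f ` {..<Suc n}. \<Sum>i\<in>{1..c n z}. g z i) + g (f n) (c n (f n) + 1)"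
    by (subst sum.distrib) (simp add: sum.delta')
  also have "(\<Sum>z\<in>f ` {..<Suc n}. \<Sum>i\<in>{1..c n z}. g z i) = (\<Sum>z\<in>f ` {..<n}. \<Sum>i\<in>{1..c n z}. g z i)"
  proof (rule sum.mono_neutral_right)
    show "\<forall>z\<in>f ` {..<Suc n} - f ` {..<n}. (\<Sum>i = 1..c n z. g z i) = 0"
    proof
      fix z assume "z \<in> f ` {..<Suc n} - f ` {..<n}"
      then have "z \<notin> f ` {..<n}" by blast
      then have "{m. m < n \<and> f m = z} = {}" by auto
      then show "(\<Sum>i = 1..c n z. g z i) = 0" unfolding c_def by simp
    qed
  qed auto
  finally show ?case using Suc.IH cn unfolding c_def by simp
qed

lemma count_card: "count_list xs z = card {j. j < length xs \<and> xs ! j = z}"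
proof (induction xs rule: rev_induct)
  case Nil then show ?case by simp
next
  case (snoc y xs)
  have e: "{j. j < length (xs @ [y]) \<and> (xs @ [y]) ! j = z} =
     {j. j < length xs \<and> xs ! j = z} \<union> (if y = z then {length xs} else {})"
    by (auto simp: nth_append less_Suc_eq)
  show ?case unfolding e using snoc by (subst card_Un_disjoint) auto
qed

lemma hist_nth: "m \<le> n \<Longrightarrow> hist \<omega> x u n ! m = walk \<omega> x u m"
proof (induction n arbitrary: m)
  case 0 then show ?case by (simp add: walk_def)
next
  case (Suc n)
  show ?case
  proof (cases "m \<le> n")
    case True
    then show ?thesis using Suc.IH[OF True] unfolding hist_Suc'[of \<omega> x u n]
      by (simp add: nth_append)
  next
    case False
    then have "m = Suc n" using Suc.prems by simp
    then show ?thesis by (simp only: walk_def hist_Suc'[of \<omega> x u n]) (simp add: nth_append)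
  qed
qed

definition DL :: "env \<Rightarrow> int list \<Rightarrow> real" where
  "DL \<omega> h = (\<Sum>m<length h - 1. 2 * \<omega> (h ! m) (count_list (take (Suc m) h) (h ! m)) - 1)"

lemma D_eq_DL: "D \<omega> x u n = DL \<omega> (hist \<omega> x u n)"
proof -
  have "D \<omega> x u n = (\<Sum>m<n. 2 * \<omega> (walk \<omega> x u m) (card {j. j \<le> m \<and> walk \<omega> x u j = walk \<omega> x u m}) - 1)"
    unfolding D_def Dz_def by (rule sites_times)
  also have "\<dots> = DL \<omega> (hist \<omega> x u n)"
    unfolding DL_def
  proof (simp, rule sum.cong)
    fix m assume "m \<in> {..<n}"
    then have m: "m < n" by simp
    have e: "count_list (take (Suc m) (hist \<omega> x u n)) (walk \<omega> x u m)
       = card {j. j \<le> m \<and> walk \<omega> x u j = walk \<omega> x u m}"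
      unfolding count_card using m by (intro arg_cong[where f=card]) (auto simp: hist_nth)
    show "2 * \<omega> (walk \<omega> x u m) (card {j. j \<le> m \<and> walk \<omega> x u j = walk \<omega> x u m}) - 1 =
       2 * \<omega> (hist \<omega> x u n ! m) (count_list (take (Suc m) (hist \<omega> x u n)) (hist \<omega> x u n ! m)) - 1"
      using m by (simp add: hist_nth e)
  qed simp
  finally show ?thesis .
qed

lemma DL_snoc: "h \<noteq> [] \<Longrightarrow> DL \<omega> (h @ [y]) = DL \<omega> h + (2 * stepp \<omega> h - 1)"
proof -
  assume ne: "h \<noteq> []"
  then obtain l where l: "length h = Suc l" by (cases h) auto
  have "DL \<omega> (h @ [y]) = (\<Sum>m<Suc l. 2 * \<omega> ((h @ [y]) ! m) (count_list (take (Suc m) (h @ [y])) ((h @ [y]) ! m)) - 1)"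
    unfolding DL_def using l by simp
  also have "\<dots> = (\<Sum>m<l. 2 * \<omega> (h ! m) (count_list (take (Suc m) h) (h ! m)) - 1)
      + (2 * \<omega> (h ! l) (count_list h (h ! l)) - 1)"
    using l by (simp add: nth_append)
  also have "h ! l = last h" using l ne by (simp add: last_conv_nth)
  finally show ?thesis unfolding DL_def stepp_def using l by simp
qed

lemma DL_term_nonneg:
  assumes "\<omega> \<in> Omega_plus" "m < length h"
  shows "0 \<le> 2 * \<omega> (h ! m) (count_list (take (Suc m) h) (h ! m)) - 1"
proof -
  have "h ! m \<in> set (take (Suc m) h)" using assms(2)
    by (metis in_set_conv_nth length_take lessI min_less_iff_conj nth_take)
  then have "count_list (take (Suc m) h) (h ! m) \<noteq> 0" by (simp add: count_list_0_iff)
  then have "1 \<le> count_list (take (Suc m) h) (h ! m)" by simp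
  then have "1/2 \<le> \<omega> (h ! m) (count_list (take (Suc m) h) (h ! m))"
    using assms(1) unfolding Omega_plus_def by blast
  then show ?thesis by linarith
qed

lemma DL_nonneg: "\<omega> \<in> Omega_plus \<Longrightarrow> 0 \<le> DL \<omega> h"
  unfolding DL_def by (rule sum_nonneg) (rule DL_term_nonneg, auto)

lemma DL_append_mono: "\<omega> \<in> Omega_plus \<Longrightarrow> DL \<omega> a \<le> DL \<omega> (a @ r)"
proof -
  assume om: "\<omega> \<in> Omega_plus"
  have "DL \<omega> a = (\<Sum>m<length a - 1. 2 * \<omega> ((a @ r) ! m) (count_list (take (Suc m) (a @ r)) ((a @ r) ! m)) - 1)"
    unfolding DL_def by (rule sum.cong) (auto simp: nth_append)
  also have "\<dots> \<le> DL \<omega> (a @ r)" unfolding DL_def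
    apply (rule sum_mono2)
      apply simp
     apply simp
    apply (rule DL_term_nonneg[OF om])
    by auto
  finally show ?thesis .
qed

lemma super_le:
  assumes om: "\<omega> \<in> Omega_plus"
    and nn: "\<And>h. reach \<omega> x h \<Longrightarrow> 0 \<le> F h"
    and st: "\<And>h. reach \<omega> x h \<Longrightarrow>
      stepp \<omega> h * F (h @ [last h + 1]) + (1 - stepp \<omega> h) * F (h @ [last h - 1]) \<le> F h"
  shows "(\<integral>\<^sup>+ u. ennreal (F (hist \<omega> x u n)) \<partial>unif_seq) \<le> ennreal (F [x])"
proof (induction n)
  case 0
  interpret prob_space unif_seq by (rule prob_P)
  show ?case by (simp add: emeasure_space_1)
next
  case (Suc n)
  have a: "\<And>u. 0 \<le> stepp \<omega> (hist \<omega> x u n) \<and> stepp \<omega> (hist \<omega> x u n) \<le> 1"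
    using stepp_bounds[OF om] by (metis hist_ne dual_order.trans linorder_not_le not_one_le_zero
          divide_nonneg_nonneg zero_le_one zero_le_numeral)
  have "(\<integral>\<^sup>+ u. ennreal (F (hist \<omega> x u (Suc n))) \<partial>unif_seq) =
    (\<integral>\<^sup>+ u. ennreal (stepp \<omega> (hist \<omega> x u n)) * ennreal (F (hist \<omega> x u n @ [last (hist \<omega> x u n) + 1]))
       + ennreal (1 - stepp \<omega> (hist \<omega> x u n)) * ennreal (F (hist \<omega> x u n @ [last (hist \<omega> x u n) - 1])) \<partial>unif_seq)"
    by (rule one_step[OF a])
  also have "\<dots> \<le> (\<integral>\<^sup>+ u. ennreal (F (hist \<omega> x u n)) \<partial>unif_seq)"
  proof (rule nn_integral_mono)
    fix u
    let ?h = "hist \<omega> x u n"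
    have r: "reach \<omega> x ?h" by (rule reach_hist)
    have p1: "0 \<le> F (?h @ [last ?h + 1])" "0 \<le> F (?h @ [last ?h - 1])"
      using nn reach_step[OF om r] by auto
    have a1: "0 \<le> stepp \<omega> ?h" "0 \<le> 1 - stepp \<omega> ?h" using a[of u] by auto
    have "ennreal (stepp \<omega> ?h) * ennreal (F (?h @ [last ?h + 1])) + ennreal (1 - stepp \<omega> ?h) * ennreal (F (?h @ [last ?h - 1]))
       = ennreal (stepp \<omega> ?h * F (?h @ [last ?h + 1]) + (1 - stepp \<omega> ?h) * F (?h @ [last ?h - 1]))"
      using p1 a1 by (simp add: ennreal_mult)
    also have "\<dots> \<le> ennreal (F ?h)" by (rule ennreal_leI[OF st[OF r]])
    finally show "ennreal (stepp \<omega> ?h) * ennreal (F (?h @ [last ?h + 1])) + ennreal (1 - stepp \<omega> ?h) * ennreal (F (?h @ [last ?h - 1]))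
       \<le> ennreal (F ?h)" .
  qed
  finally show ?case using Suc.IH by simp
qed

lemma super_eq:
  assumes om: "\<omega> \<in> Omega_plus"
    and nn: "\<And>h. reach \<omega> x h \<Longrightarrow> 0 \<le> F h"
    and st: "\<And>h. reach \<omega> x h \<Longrightarrow>
      stepp \<omega> h * F (h @ [last h + 1]) + (1 - stepp \<omega> h) * F (h @ [last h - 1]) = F h"
  shows "(\<integral>\<^sup>+ u. ennreal (F (hist \<omega> x u n)) \<partial>unif_seq) = ennreal (F [x])"
proof (induction n)
  case 0
  interpret prob_space unif_seq by (rule prob_P)
  show ?case by (simp add: emeasure_space_1)
next
  case (Suc n)
  have a: "\<And>u. 0 \<le> stepp \<omega> (hist \<omega> x u n) \<and> stepp \<omega> (hist \<omega> x u n) \<le> 1"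
    using stepp_bounds[OF om] by (metis hist_ne dual_order.trans linorder_not_le not_one_le_zero
          divide_nonneg_nonneg zero_le_one zero_le_numeral)
  have "(\<integral>\<^sup>+ u. ennreal (F (hist \<omega> x u (Suc n))) \<partial>unif_seq) =
    (\<integral>\<^sup>+ u. ennreal (stepp \<omega> (hist \<omega> x u n)) * ennreal (F (hist \<omega> x u n @ [last (hist \<omega> x u n) + 1]))
       + ennreal (1 - stepp \<omega> (hist \<omega> x u n)) * ennreal (F (hist \<omega> x u n @ [last (hist \<omega> x u n) - 1])) \<partial>unif_seq)"
    by (rule one_step[OF a])
  also have "\<dots> = (\<integral>\<^sup>+ u. ennreal (F (hist \<omega> x u n)) \<partial>unif_seq)"
  proof (rule nn_integral_cong)
    fix u
    let ?h = "hist \<omega> x u n"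
    have r: "reach \<omega> x ?h" by (rule reach_hist)
    have p1: "0 \<le> F (?h @ [last ?h + 1])" "0 \<le> F (?h @ [last ?h - 1])"
      using nn reach_step[OF om r] by auto
    have a1: "0 \<le> stepp \<omega> ?h" "0 \<le> 1 - stepp \<omega> ?h" using a[of u] by auto
    have "ennreal (stepp \<omega> ?h) * ennreal (F (?h @ [last ?h + 1])) + ennreal (1 - stepp \<omega> ?h) * ennreal (F (?h @ [last ?h - 1]))
       = ennreal (stepp \<omega> ?h * F (?h @ [last ?h + 1]) + (1 - stepp \<omega> ?h) * F (?h @ [last ?h - 1]))"
      using p1 a1 by (simp add: ennreal_mult)
    also have "\<dots> = ennreal (F ?h)" by (simp only: st[OF r])
    finally show "ennreal (stepp \<omega> ?h) * ennreal (F (?h @ [last ?h + 1])) + ennreal (1 - stepp \<omega> ?h) * ennreal (F (?h @ [last ?h - 1]))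
       = ennreal (F ?h)" .
  qed
  finally show ?case using Suc.IH by simp
qed



lemma set_butlast_last: "t \<noteq> [] \<Longrightarrow> z \<in> set t \<Longrightarrow> z \<in> set (butlast t) \<or> z = last t"
  by (metis append_butlast_last_id butlast_snoc in_set_butlast_appendI last_snoc rotate1.simps(2)
      set_rotate1 set_ConsD)

lemma last_tu_le_k:
  assumes "x \<le> k" "B k" "reach \<omega> x h"
  shows "last (tu B h) \<le> k"
proof -
  have r: "reach \<omega> x (tu B h)" using reach_tu[OF assms(3)] .
  then have ne: "tu B h \<noteq> []" using reach_ne by blast
  show ?thesis
  proof (cases "k \<in> set (tu B h)")
    case True
    have "k \<notin> set (butlast (tu B h))" using tu_butlast assms(2) by blast
    then have "k = last (tu B h)" using set_butlast_last[OF ne True] by blast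
    then show ?thesis by simp
  next
    case False
    then show ?thesis using reach_k[OF assms(1) r] by fastforce
  qed
qed

lemma Lp_tu_ge:
  assumes "reach \<omega> x h" "\<And>y. y \<le> c \<Longrightarrow> B y" "c < x"
  shows "c + 1 \<le> Lp (tu B h)"
proof (rule Lp_ge)
  fix z assume "z \<in> set (butlast (tu B h))"
  then have "\<not> B z" by (rule tu_butlast)
  then have "\<not> z \<le> c" using assms(2) by blast
  then show "c + 1 \<le> z" by linarith
next
  have "hd (tu B h) = x" using tu_hd reach_ne[OF assms(1)] by metis
  then show "c + 1 \<le> hd (tu B h) + 1" using assms(3) by simp
qed

lemma last_tu_ge:
  assumes "reach \<omega> x h" "\<And>y. y \<le> c \<Longrightarrow> B y" "c < x"
  shows "c \<le> last (tu B h)"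
  using Lp_tu_ge[of \<omega> x h c B, OF assms] reach_Lp[OF reach_tu[of \<omega> x h B, OF assms(1)]] by simp

definition Phi :: "env \<Rightarrow> int \<Rightarrow> (int \<Rightarrow> bool) \<Rightarrow> int list \<Rightarrow> real" where
  "Phi \<omega> k B h = DL \<omega> (tu B h) + real_of_int (k - last (tu B h))"

lemma DL_single[simp]: "DL \<omega> [y] = 0"
  unfolding DL_def by simp

lemma Phi_step:
  assumes om: "\<omega> \<in> Omega_plus" and xk: "x \<le> k" and Bk: "B k" and r: "reach \<omega> x h"
  shows "stepp \<omega> h * Phi \<omega> k B (h @ [last h + 1]) + (1 - stepp \<omega> h) * Phi \<omega> k B (h @ [last h - 1]) = Phi \<omega> k B h"
proof (cases "\<exists>z\<in>set h. B z")
  case True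
  then have "Phi \<omega> k B (h @ [y]) = Phi \<omega> k B h" for y unfolding Phi_def tu_snoc by simp
  then show ?thesis by (simp add: algebra_simps)
next
  case False
  have ne: "h \<noteq> []" using reach_ne[OF r] by simp
  have e: "tu B (h @ [y]) = h @ [y]" "tu B h = h" for y using False tu_snoc tu_noB by auto
  have p: "Phi \<omega> k B (h @ [y]) = DL \<omega> h + (2 * stepp \<omega> h - 1) + real_of_int (k - y)" for y
    unfolding Phi_def e DL_snoc[OF ne] by simp
  have p0: "Phi \<omega> k B h = DL \<omega> h + real_of_int (k - last h)" unfolding Phi_def e by simp
  show ?thesis unfolding p p0 by (simp add: algebra_simps)
qed

lemma Phi_nonneg:
  assumes om: "\<omega> \<in> Omega_plus" and xk: "x \<le> k" and Bk: "B k" and r: "reach \<omega> x h"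
  shows "0 \<le> Phi \<omega> k B h"
  unfolding Phi_def using DL_nonneg[OF om] last_tu_le_k[of x k B \<omega> h, OF xk Bk r] by (simp add: add_nonneg_nonneg)

lemma mart:
  assumes om: "\<omega> \<in> Omega_plus" and xk: "x \<le> k" and Bk: "B k"
  shows "(\<integral>\<^sup>+ u. ennreal (DL \<omega> (tu B (hist \<omega> x u n))) \<partial>unif_seq) +
         (\<integral>\<^sup>+ u. ennreal (real_of_int (k - last (tu B (hist \<omega> x u n)))) \<partial>unif_seq) = ennreal (real_of_int (k - x))"
proof -
  have "(\<integral>\<^sup>+ u. ennreal (Phi \<omega> k B (hist \<omega> x u n)) \<partial>unif_seq) = ennreal (Phi \<omega> k B [x])"
    by (rule super_eq[OF om]) (auto intro: Phi_nonneg[of \<omega> x k B, OF om xk Bk] Phi_step[of \<omega> x k B, OF om xk Bk])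
  also have "Phi \<omega> k B [x] = real_of_int (k - x)" unfolding Phi_def by simp
  also have "(\<integral>\<^sup>+ u. ennreal (Phi \<omega> k B (hist \<omega> x u n)) \<partial>unif_seq) =
     (\<integral>\<^sup>+ u. ennreal (DL \<omega> (tu B (hist \<omega> x u n))) + ennreal (real_of_int (k - last (tu B (hist \<omega> x u n)))) \<partial>unif_seq)"
    unfolding Phi_def
    by (rule nn_integral_cong) (simp add: DL_nonneg[OF om] last_tu_le_k[of x k B \<omega>, OF xk Bk reach_hist])
  also have "\<dots> = (\<integral>\<^sup>+ u. ennreal (DL \<omega> (tu B (hist \<omega> x u n))) \<partial>unif_seq) +
         (\<integral>\<^sup>+ u. ennreal (real_of_int (k - last (tu B (hist \<omega> x u n)))) \<partial>unif_seq)"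
    by (rule nn_integral_add) simp_all
  finally show ?thesis .
qed

definition gV :: "int \<Rightarrow> nat \<Rightarrow> int \<Rightarrow> real" where
  "gV k m X = real_of_int ((k - X) * (X + k + 2 * int m))"

definition V :: "int \<Rightarrow> nat \<Rightarrow> (int \<Rightarrow> bool) \<Rightarrow> int list \<Rightarrow> real" where
  "V k m B h = gV k m (last (tu B h)) + real (length (tu B h) - 1)"

definition Bm :: "int \<Rightarrow> nat \<Rightarrow> int \<Rightarrow> bool" where
  "Bm k m y \<longleftrightarrow> y = k \<or> y \<le> - int m"

lemma gV_nonneg: "- int m \<le> X \<Longrightarrow> X \<le> k \<Longrightarrow> 0 \<le> gV k m X"
  unfolding gV_def by simp

lemma gV_step:
  assumes "1/2 \<le> a" "a \<le> 1" "- int m < X"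
  shows "a * gV k m (X + 1) + (1 - a) * gV k m (X - 1) + 1 \<le> gV k m X"
proof -
  have e: "gV k m X - (a * gV k m (X + 1) + (1 - a) * gV k m (X - 1)) = 1 + (2 * a - 1) * (2 * X + 2 * int m)"
    unfolding gV_def by (simp add: algebra_simps)
  have "0 \<le> (2 * a - 1) * (2 * X + 2 * int m)" using assms by simp
  then show ?thesis using e by linarith
qed

lemma V_nonneg:
  assumes xk: "x \<le> k" and xm: "- int m < x" and r: "reach \<omega> x h"
  shows "0 \<le> V k m (Bm k m) h"
proof -
  have "- int m \<le> last (tu (Bm k m) h)"
    by (rule last_tu_ge[OF r _ xm]) (simp add: Bm_def)
  moreover have "last (tu (Bm k m) h) \<le> k"
    by (rule last_tu_le_k[OF xk _ r]) (simp add: Bm_def)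
  ultimately show ?thesis unfolding V_def using gV_nonneg by (simp add: add_nonneg_nonneg)
qed

lemma V_step:
  assumes om: "\<omega> \<in> Omega_plus" and xk: "x \<le> k" and xm: "- int m < x" and r: "reach \<omega> x h"
  shows "stepp \<omega> h * V k m (Bm k m) (h @ [last h + 1]) + (1 - stepp \<omega> h) * V k m (Bm k m) (h @ [last h - 1])
     \<le> V k m (Bm k m) h"
proof (cases "\<exists>z\<in>set h. Bm k m z")
  case True
  then have "V k m (Bm k m) (h @ [y]) = V k m (Bm k m) h" for y unfolding V_def tu_snoc by simp
  then show ?thesis by (simp add: algebra_simps)
next
  case False
  have ne: "h \<noteq> []" using reach_ne[OF r] by simp
  have e: "tu (Bm k m) (h @ [y]) = h @ [y]" "tu (Bm k m) h = h" for y using False tu_snoc tu_noB by auto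
  have "last h \<in> set h" using ne by simp
  then have lm: "- int m < last h" using False unfolding Bm_def by force
  have a: "1/2 \<le> stepp \<omega> h" "stepp \<omega> h \<le> 1" using stepp_bounds[OF om ne] by auto
  have len: "real (length h) = real (length h - 1) + 1" using ne by (cases h) auto
  have "stepp \<omega> h * V k m (Bm k m) (h @ [last h + 1]) + (1 - stepp \<omega> h) * V k m (Bm k m) (h @ [last h - 1])
     = stepp \<omega> h * gV k m (last h + 1) + (1 - stepp \<omega> h) * gV k m (last h - 1) + real (length h)"
    unfolding V_def e by (simp add: algebra_simps)
  also have "\<dots> \<le> gV k m (last h) + real (length h - 1)"
    using gV_step[OF a lm, of k] len by linarith
  finally show ?thesis unfolding V_def e .
qed



definition Hf :: "env \<Rightarrow> int \<Rightarrow> nat \<Rightarrow> int \<Rightarrow> real" where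
  "Hf \<omega> k m y = (\<Prod>z\<in>{- int m + 1..y}. 1 - 2 * \<omega> z 1 / real_of_int (k - z + 1))"

definition fF :: "env \<Rightarrow> int \<Rightarrow> nat \<Rightarrow> int \<Rightarrow> int \<Rightarrow> real" where
  "fF \<omega> k m X L = real_of_int (k - X) / real_of_int (k - L + 1) * Hf \<omega> k m (L - 1)"

definition Ff :: "env \<Rightarrow> int \<Rightarrow> nat \<Rightarrow> int list \<Rightarrow> real" where
  "Ff \<omega> k m h = fF \<omega> k m (last (tu (Bm k m) h)) (Lp (tu (Bm k m) h))"

lemma om_bounds: "\<omega> \<in> Omega_plus \<Longrightarrow> 1 \<le> i \<Longrightarrow> 1/2 \<le> \<omega> z i \<and> \<omega> z i \<le> 1"
  unfolding Omega_plus_def by blast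

lemma Hf_nonneg:
  assumes om: "\<omega> \<in> Omega_plus" and yk: "y < k"
  shows "0 \<le> Hf \<omega> k m y"
  unfolding Hf_def
proof (rule prod_nonneg)
  fix z assume "z \<in> {- int m + 1..y}"
  then have z: "z \<le> y" by simp
  have d: "2 \<le> real_of_int (k - z + 1)" using z yk by simp
  have "2 * \<omega> z 1 \<le> 2" using om_bounds[OF om, of 1 z] by simp
  then have "2 * \<omega> z 1 / real_of_int (k - z + 1) \<le> 1" using d by (simp add: divide_le_eq_1_pos)
  then show "0 \<le> 1 - 2 * \<omega> z 1 / real_of_int (k - z + 1)" by simp
qed

lemma Hf_base: "Hf \<omega> k m (- int m) = 1"
  unfolding Hf_def by simp

lemma Hf_Suc:
  assumes "- int m + 1 \<le> y"
  shows "Hf \<omega> k m y = (1 - 2 * \<omega> y 1 / real_of_int (k - y + 1)) * Hf \<omega> k m (y - 1)"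
proof -
  have e: "{- int m + 1..y} = insert y {- int m + 1..y - 1}" using assms by auto
  show ?thesis unfolding Hf_def e by (subst prod.insert) auto
qed

lemma Ff_nonneg:
  assumes om: "\<omega> \<in> Omega_plus" and xk: "x < k" and r: "reach \<omega> x h"
  shows "0 \<le> Ff \<omega> k m h"
proof -
  let ?t = "tu (Bm k m) h"
  have X: "last ?t \<le> k" by (rule last_tu_le_k[OF _ _ r]) (use xk in \<open>simp_all add: Bm_def\<close>)
  have "hd ?t = x" using tu_hd reach_ne[OF r] by metis
  then have L: "Lp ?t \<le> x + 1" using Lp_le_hd[of ?t] by simp
  have "0 \<le> Hf \<omega> k m (Lp ?t - 1)" by (rule Hf_nonneg[OF om]) (use L xk in simp)
  then show ?thesis unfolding Ff_def fF_def using X L xk by simp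
qed

lemma count_fresh:
  assumes ne: "h \<noteq> []" and lt: "last h < Lp h"
  shows "count_list h (last h) = 1"
proof -
  have "last h \<notin> set (butlast h)" using Lp_le lt by force
  then have "count_list (butlast h) (last h) = 0" by (simp add: count_list_0_iff)
  moreover have "h = butlast h @ [last h]" using ne by simp
  ultimately show ?thesis by (metis count_list_append count_list.simps add.left_neutral add_0 if_True)
qed

lemma Ff_step:
  assumes om: "\<omega> \<in> Omega_plus" and xk: "x < k" and xm: "- int m < x" and r: "reach \<omega> x h"
  shows "stepp \<omega> h * Ff \<omega> k m (h @ [last h + 1]) + (1 - stepp \<omega> h) * Ff \<omega> k m (h @ [last h - 1])
     \<le> Ff \<omega> k m h"
proof (cases "\<exists>z\<in>set h. Bm k m z")
  case True
  then have "Ff \<omega> k m (h @ [y]) = Ff \<omega> k m h" for y unfolding Ff_def tu_snoc by simp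
  then show ?thesis by (simp add: algebra_simps)
next
  case False
  have ne: "h \<noteq> []" using reach_ne[OF r] by simp
  have e: "tu (Bm k m) (h @ [y]) = h @ [y]" "tu (Bm k m) h = h" for y using False tu_snoc tu_noB by auto
  let ?l = "last h" and ?L = "Lp h" and ?a = "stepp \<omega> h"
  have "?l \<in> set h" using ne by simp
  then have lm: "- int m < ?l" "?l \<noteq> k" using False unfolding Bm_def by force+
  have "k \<notin> set h" using False unfolding Bm_def by blast
  then have lk: "?l < k" using reach_k[of x k \<omega> h] xk r by simp
  have Lm: "- int m + 1 \<le> ?L" using Lp_tu_ge[of \<omega> x h "- int m" "Bm k m", OF r _ xm] e(2)
    by (simp add: Bm_def)
  have lL: "?L - 1 \<le> ?l" by (rule reach_Lp[OF r])
  have a: "1/2 \<le> ?a" "?a \<le> 1" using stepp_bounds[OF om ne] by auto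
  have Ff_y: "Ff \<omega> k m (h @ [y]) = fF \<omega> k m y (min ?L ?l)" for y
    unfolding Ff_def e using Lp_snoc[OF ne] by simp
  have Ff_h: "Ff \<omega> k m h = fF \<omega> k m ?l ?L" unfolding Ff_def e ..
  show ?thesis
  proof (cases "?L \<le> ?l")
    case True
    then have mn: "min ?L ?l = ?L" by simp
    define C where "C = Hf \<omega> k m (?L - 1) / real_of_int (k - ?L + 1)"
    have C: "0 \<le> C" unfolding C_def using Hf_nonneg[OF om, of "?L - 1" k m] True lk by simp
    have fx: "fF \<omega> k m X ?L = real_of_int (k - X) * C" for X unfolding fF_def C_def by simp
    have "?a * (real_of_int (k - (?l + 1)) * C) + (1 - ?a) * (real_of_int (k - (?l - 1)) * C)
        = real_of_int (k - ?l) * C + (1 - 2 * ?a) * C" by (simp add: algebra_simps)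
    also have "\<dots> \<le> real_of_int (k - ?l) * C" using a C by (simp add: mult_nonpos_nonneg)
    finally show ?thesis unfolding Ff_y Ff_h mn fx .
  next
    case False
    then have lL2: "?L = ?l + 1" using lL by simp
    then have mn: "min ?L ?l = ?l" by simp
    have cnt: "count_list h ?l = 1" using count_fresh[OF ne] lL2 by simp
    then have aw: "?a = \<omega> ?l 1" unfolding stepp_def by simp
    have l1: "- int m + 1 \<le> ?l" using lm by simp
    define H' where "H' = Hf \<omega> k m (?l - 1)"
    define d where "d = real_of_int (k - ?l + 1)"
    have d: "0 < d" unfolding d_def using lk by simp
    have f1: "fF \<omega> k m (?l + 1) ?l = (d - 2) / d * H'" unfolding fF_def d_def H'_def by simp
    have kl: "k - (?l - 1) = k - ?l + 1" by simp
    have f2: "fF \<omega> k m (?l - 1) ?l = H'" unfolding fF_def H'_def kl using d d_def by simp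
    have f0: "fF \<omega> k m ?l ?L = (1 - 2 * ?a / d) * H'"
      unfolding fF_def lL2 using lk by (simp add: Hf_Suc[OF l1] aw d_def H'_def)
    have "?a * ((d - 2) / d * H') + (1 - ?a) * H' = (1 - 2 * ?a / d) * H'"
      using d by (simp add: field_simps)
    then show ?thesis unfolding Ff_y Ff_h mn f1 f2 f0 by simp
  qed
qed

lemma Ff_init: "x < k \<Longrightarrow> Ff \<omega> k m [x] = Hf \<omega> k m x"
  unfolding Ff_def fF_def by (simp add: Lp_def)

lemma Ff_low:
  assumes xk: "x < k" and xm: "- int m < x" and r: "reach \<omega> x h"
    and low: "last (tu (Bm k m) h) \<le> - int m"
  shows "Ff \<omega> k m h = 1"
proof -
  let ?t = "tu (Bm k m) h"
  have L: "- int m + 1 \<le> Lp ?t" by (rule Lp_tu_ge[OF r _ xm]) (simp add: Bm_def)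
  have "Lp ?t - 1 \<le> last ?t" by (rule reach_Lp[OF reach_tu[OF r]])
  then have e: "last ?t = - int m" "Lp ?t = - int m + 1" using L low by auto
  have "0 < k + int m" using xk xm by simp
  then show ?thesis unfolding Ff_def fF_def e by (simp add: Hf_base)
qed

lemma pointwise_bound:
  assumes om: "\<omega> \<in> Omega_plus" and xk: "x < k" and xm: "- int m < x" and n: "0 < n"
  shows "real_of_int (k - last (tu (Bm k m) (hist \<omega> x u n))) \<le>
     real_of_int (k + int m) / real n * V k m (Bm k m) (hist \<omega> x u n) + real_of_int (k + int m) * Ff \<omega> k m (hist \<omega> x u n)"
proof -
  let ?h = "hist \<omega> x u n"
  let ?t = "tu (Bm k m) ?h"
  have r: "reach \<omega> x ?h" by (rule reach_hist)
  have Xl: "- int m \<le> last ?t" by (rule last_tu_ge[OF r _ xm]) (simp add: Bm_def)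
  have Xu: "last ?t \<le> k" by (rule last_tu_le_k[OF _ _ r]) (use xk in \<open>simp_all add: Bm_def\<close>)
  have km: "0 < k + int m" using xk xm by simp
  have Vn: "0 \<le> V k m (Bm k m) ?h" by (rule V_nonneg[OF _ xm r]) (use xk in simp)
  have Fn: "0 \<le> Ff \<omega> k m ?h" by (rule Ff_nonneg[OF om xk r])
  have A: "0 \<le> real_of_int (k + int m) / real n * V k m (Bm k m) ?h" using km Vn by simp
  have B: "0 \<le> real_of_int (k + int m) * Ff \<omega> k m ?h" using km Fn by simp
  show ?thesis
  proof (cases "?t = ?h")
    case True
    then have "V k m (Bm k m) ?h = gV k m (last ?t) + real n" unfolding V_def by simp
    then have "real n \<le> V k m (Bm k m) ?h" using gV_nonneg[OF Xl Xu] by simp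
    then have "real_of_int (k + int m) / real n * real n \<le> real_of_int (k + int m) / real n * V k m (Bm k m) ?h"
      using km by (intro mult_left_mono) auto
    then have "real_of_int (k + int m) \<le> real_of_int (k + int m) / real n * V k m (Bm k m) ?h"
      using n by simp
    then show ?thesis using Xl B by linarith
  next
    case False
    then have "Bm k m (last ?t)" by (rule tu_last)
    then have "last ?t = k \<or> last ?t \<le> - int m" unfolding Bm_def .
    then show ?thesis
    proof (elim disjE)
      assume "last ?t = k" then show ?thesis using A B by simp
    next
      assume low: "last ?t \<le> - int m"
      have "Ff \<omega> k m ?h = 1" by (rule Ff_low[OF xk xm r low])
      then show ?thesis using A Xl by simp
    qed
  qed
qed



lemma V_init: "V k m B [x] = gV k m x"
  unfolding V_def by simp

lemma bound_Bm:
  assumes om: "\<omega> \<in> Omega_plus" and xk: "x < k" and xm: "- int m < x" and n: "0 < n"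
  shows "(\<integral>\<^sup>+ u. ennreal (real_of_int (k - last (tu (Bm k m) (hist \<omega> x u n)))) \<partial>unif_seq)
     \<le> ennreal (real_of_int (k + int m) / real n * gV k m x + real_of_int (k + int m) * Hf \<omega> k m x)"
proof -
  let ?c1 = "real_of_int (k + int m) / real n" and ?c2 = "real_of_int (k + int m)"
  have km: "0 < k + int m" using xk xm by simp
  have c: "0 \<le> ?c1" "0 \<le> ?c2" using km by auto
  have Vn: "\<And>h. reach \<omega> x h \<Longrightarrow> 0 \<le> V k m (Bm k m) h" by (rule V_nonneg[OF _ xm]) (use xk in simp_all)
  have Fn: "\<And>h. reach \<omega> x h \<Longrightarrow> 0 \<le> Ff \<omega> k m h" by (rule Ff_nonneg[OF om xk])
  have "(\<integral>\<^sup>+ u. ennreal (real_of_int (k - last (tu (Bm k m) (hist \<omega> x u n)))) \<partial>unif_seq)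
     \<le> (\<integral>\<^sup>+ u. ennreal (?c1 * V k m (Bm k m) (hist \<omega> x u n) + ?c2 * Ff \<omega> k m (hist \<omega> x u n)) \<partial>unif_seq)"
    by (rule nn_integral_mono, rule ennreal_leI, rule pointwise_bound[OF om xk xm n])
  also have "\<dots> = (\<integral>\<^sup>+ u. ennreal ?c1 * ennreal (V k m (Bm k m) (hist \<omega> x u n)) + ennreal ?c2 * ennreal (Ff \<omega> k m (hist \<omega> x u n)) \<partial>unif_seq)"
  proof (rule nn_integral_cong)
    fix u
    have p1: "0 \<le> ?c1 * V k m (Bm k m) (hist \<omega> x u n)" using c Vn[OF reach_hist] by simp
    have p2: "0 \<le> ?c2 * Ff \<omega> k m (hist \<omega> x u n)" using c Fn[OF reach_hist] by simp
    show "ennreal (?c1 * V k m (Bm k m) (hist \<omega> x u n) + ?c2 * Ff \<omega> k m (hist \<omega> x u n)) =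
      ennreal ?c1 * ennreal (V k m (Bm k m) (hist \<omega> x u n)) + ennreal ?c2 * ennreal (Ff \<omega> k m (hist \<omega> x u n))"
      by (subst ennreal_plus[OF p1 p2], subst ennreal_mult[OF c(1) Vn[OF reach_hist]],
          subst ennreal_mult[OF c(2) Fn[OF reach_hist]]) (rule refl)
  qed
  also have "\<dots> = ennreal ?c1 * (\<integral>\<^sup>+ u. ennreal (V k m (Bm k m) (hist \<omega> x u n)) \<partial>unif_seq)
      + ennreal ?c2 * (\<integral>\<^sup>+ u. ennreal (Ff \<omega> k m (hist \<omega> x u n)) \<partial>unif_seq)"
  proof -
    have m1: "(\<lambda>u. ennreal ?c1 * ennreal (V k m (Bm k m) (hist \<omega> x u n))) \<in> borel_measurable unif_seq"
      by (rule hist_fun_meas)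
    have m2: "(\<lambda>u. ennreal ?c2 * ennreal (Ff \<omega> k m (hist \<omega> x u n))) \<in> borel_measurable unif_seq"
      by (rule hist_fun_meas)
    have m3: "(\<lambda>u. ennreal (V k m (Bm k m) (hist \<omega> x u n))) \<in> borel_measurable unif_seq"
      by (rule hist_fun_meas)
    have m4: "(\<lambda>u. ennreal (Ff \<omega> k m (hist \<omega> x u n))) \<in> borel_measurable unif_seq"
      by (rule hist_fun_meas)
    show ?thesis unfolding nn_integral_add[OF m1 m2] nn_integral_cmult[OF m3] nn_integral_cmult[OF m4] ..
  qed
  also have "\<dots> \<le> ennreal ?c1 * ennreal (V k m (Bm k m) [x]) + ennreal ?c2 * ennreal (Ff \<omega> k m [x])"
  proof -
    have s1: "(\<integral>\<^sup>+ u. ennreal (V k m (Bm k m) (hist \<omega> x u n)) \<partial>unif_seq) \<le> ennreal (V k m (Bm k m) [x])"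
      by (rule super_le[OF om Vn V_step[OF om less_imp_le[OF xk] xm]])
    have s2: "(\<integral>\<^sup>+ u. ennreal (Ff \<omega> k m (hist \<omega> x u n)) \<partial>unif_seq) \<le> ennreal (Ff \<omega> k m [x])"
      by (rule super_le[OF om Fn Ff_step[OF om xk xm]])
    show ?thesis by (intro add_mono mult_left_mono s1 s2 zero_le)
  qed
  also have "\<dots> = ennreal (?c1 * gV k m x + ?c2 * Hf \<omega> k m x)"
  proof -
    have g0: "0 \<le> gV k m x" using gV_nonneg[of m x k] xm xk by simp
    have H0: "0 \<le> Hf \<omega> k m x" using Hf_nonneg[OF om xk] .
    have q1: "0 \<le> ?c1 * gV k m x" using c g0 by simp
    have q2: "0 \<le> ?c2 * Hf \<omega> k m x" using c H0 by simp
    show ?thesis unfolding V_init Ff_init[OF xk] ennreal_plus[OF q1 q2] ennreal_mult[OF c(1) g0] ennreal_mult[OF c(2) H0] ..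
  qed
  finally show ?thesis .
qed

lemma compare:
  assumes om: "\<omega> \<in> Omega_plus" and xk: "x < k" and xm: "- int m < x"
  shows "(\<integral>\<^sup>+ u. ennreal (real_of_int (k - last (tu (\<lambda>y. y = k) (hist \<omega> x u n)))) \<partial>unif_seq)
     \<le> (\<integral>\<^sup>+ u. ennreal (real_of_int (k - last (tu (Bm k m) (hist \<omega> x u n)))) \<partial>unif_seq)"
    (is "?C \<le> ?C'")
proof -
  let ?A = "(\<integral>\<^sup>+ u. ennreal (DL \<omega> (tu (\<lambda>y. y = k) (hist \<omega> x u n))) \<partial>unif_seq)"
  let ?A' = "(\<integral>\<^sup>+ u. ennreal (DL \<omega> (tu (Bm k m) (hist \<omega> x u n))) \<partial>unif_seq)"
  have B1: "(\<lambda>y. y = k) k" by simp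
  have B2: "Bm k m k" by (simp add: Bm_def)
  have e1: "?A + ?C = ennreal (real_of_int (k - x))" by (rule mart[of \<omega> x k "\<lambda>y. y = k", OF om less_imp_le[OF xk] B1])
  have e2: "?A' + ?C' = ennreal (real_of_int (k - x))" by (rule mart[of \<omega> x k "Bm k m", OF om less_imp_le[OF xk] B2])
  have AA: "?A' \<le> ?A"
  proof (rule nn_integral_mono, rule ennreal_leI)
    fix u
    have "\<And>y. y = k \<Longrightarrow> Bm k m y" by (simp add: Bm_def)
    then obtain r where "tu (\<lambda>y. y = k) (hist \<omega> x u n) = tu (Bm k m) (hist \<omega> x u n) @ r"
      using tu_mono[of "\<lambda>y. y = k" "Bm k m"] by blast
    then show "DL \<omega> (tu (Bm k m) (hist \<omega> x u n)) \<le> DL \<omega> (tu (\<lambda>y. y = k) (hist \<omega> x u n))"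
      using DL_append_mono[OF om, of "tu (Bm k m) (hist \<omega> x u n)" r] by simp
  qed
  have "?A + ?C = ?A' + ?C'" using e1 e2 by (rule trans[OF _ sym])
  also have "\<dots> \<le> ?A + ?C'" by (rule add_right_mono[OF AA])
  finally have le: "?A + ?C \<le> ?A + ?C'" .
  have "?A \<le> ?A + ?C" by (rule add_increasing2) auto
  then have Ale: "?A \<le> ennreal (real_of_int (k - x))" unfolding e1 .
  have "?A \<noteq> \<infinity>"
  proof
    assume "?A = \<infinity>"
    then show False using Ale by (simp add: top_unique)
  qed
  then show ?thesis using le ennreal_add_left_cancel_le by blast
qed

lemma hist_prefix: "n \<le> N \<Longrightarrow> \<exists>r. hist \<omega> x u N = hist \<omega> x u n @ r"
proof (induction N rule: dec_induct)
  case base then show ?case by simp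
next
  case (step N)
  then obtain r where "hist \<omega> x u N = hist \<omega> x u n @ r" by blast
  then show ?case unfolding hist_Suc'[of \<omega> x u N] by auto
qed

lemma set_hist: "z \<in> set (hist \<omega> x u n) \<longleftrightarrow> (\<exists>j\<le>n. walk \<omega> x u j = z)"
proof -
  have "z \<in> set (hist \<omega> x u n) \<longleftrightarrow> (\<exists>j<Suc n. hist \<omega> x u n ! j = z)"
    by (simp add: in_set_conv_nth)
  also have "\<dots> \<longleftrightarrow> (\<exists>j\<le>n. walk \<omega> x u j = z)"
    by (auto simp: hist_nth less_Suc_eq_le)
  finally show ?thesis .
qed

lemma tu_hist_eq:
  "tu (\<lambda>y. y = k) (hist \<omega> x u n) =
    (if \<exists>j\<le>n. walk \<omega> x u j = k then hist \<omega> x u (LEAST j. walk \<omega> x u j = k) else hist \<omega> x u n)"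
proof (induction n)
  case 0
  show ?case
  proof (cases "walk \<omega> x u 0 = k")
    case True
    then have "(LEAST j. walk \<omega> x u j = k) = 0" by (simp add: Least_eq_0)
    then show ?thesis using True by simp
  next
    case False then show ?thesis by simp
  qed
next
  case (Suc n)
  have t: "tu (\<lambda>y. y = k) (hist \<omega> x u (Suc n)) =
     (if \<exists>j\<le>n. walk \<omega> x u j = k then tu (\<lambda>y. y = k) (hist \<omega> x u n) else hist \<omega> x u (Suc n))"
    unfolding hist_Suc'[of \<omega> x u n] tu_snoc set_hist[symmetric] by auto
  show ?case
  proof (cases "\<exists>j\<le>n. walk \<omega> x u j = k")
    case True
    then have "\<exists>j\<le>Suc n. walk \<omega> x u j = k" using le_SucI by blast
    then show ?thesis using True t Suc.IH by simp
  next
    case False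
    show ?thesis
    proof (cases "walk \<omega> x u (Suc n) = k")
      case True
      have "(LEAST j. walk \<omega> x u j = k) = Suc n"
      proof (rule Least_equality)
        show "walk \<omega> x u (Suc n) = k" by fact
        fix y assume "walk \<omega> x u y = k"
        then have "\<not> y \<le> n" using False by blast
        then show "Suc n \<le> y" by simp
      qed
      then show ?thesis using True False t by auto
    next
      case False2: False
      then have nx: "\<not> (\<exists>j\<le>Suc n. walk \<omega> x u j = k)" using False by (auto simp: le_Suc_eq)
      have nx2: "\<not> (\<exists>j\<le>n. walk \<omega> x u j = k)" using False by blast
      show ?thesis unfolding t if_not_P[OF nx2] if_not_P[OF nx] ..
    qed
  qed
qed

lemma DL_hist_mono: "\<omega> \<in> Omega_plus \<Longrightarrow> n \<le> N \<Longrightarrow> DL \<omega> (hist \<omega> x u n) \<le> DL \<omega> (hist \<omega> x u N)"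
  using hist_prefix[of n N \<omega> x u] DL_append_mono by metis

lemma D_at_hit_SUP:
  assumes om: "\<omega> \<in> Omega_plus"
  shows "D_at_hit \<omega> x u k = (SUP n. ennreal (DL \<omega> (tu (\<lambda>y. y = k) (hist \<omega> x u n))))"
proof (cases "\<exists>n. walk \<omega> x u n = k")
  case True
  define N where "N = (LEAST j. walk \<omega> x u j = k)"
  have wN: "walk \<omega> x u N = k" unfolding N_def using True by (rule LeastI_ex)
  have hit: "hit \<omega> x u k = enat N" unfolding hit_def N_def using True by simp
  have f: "tu (\<lambda>y. y = k) (hist \<omega> x u n) = (if N \<le> n then hist \<omega> x u N else hist \<omega> x u n)" for n
  proof -
    have "(\<exists>j\<le>n. walk \<omega> x u j = k) \<longleftrightarrow> N \<le> n"
      using wN unfolding N_def by (auto intro: Least_le order_trans)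
    then show ?thesis unfolding tu_hist_eq N_def by simp
  qed
  have "(SUP n. ennreal (DL \<omega> (tu (\<lambda>y. y = k) (hist \<omega> x u n)))) = ennreal (DL \<omega> (hist \<omega> x u N))"
  proof (rule antisym)
    show "(SUP n. ennreal (DL \<omega> (tu (\<lambda>y. y = k) (hist \<omega> x u n)))) \<le> ennreal (DL \<omega> (hist \<omega> x u N))"
    proof (rule SUP_least)
      fix n
      show "ennreal (DL \<omega> (tu (\<lambda>y. y = k) (hist \<omega> x u n))) \<le> ennreal (DL \<omega> (hist \<omega> x u N))"
        unfolding f using DL_hist_mono[OF om, of n N x u] by (auto intro: ennreal_leI)
    qed
    show "ennreal (DL \<omega> (hist \<omega> x u N)) \<le> (SUP n. ennreal (DL \<omega> (tu (\<lambda>y. y = k) (hist \<omega> x u n))))"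
      using SUP_upper[of N UNIV "\<lambda>n. ennreal (DL \<omega> (tu (\<lambda>y. y = k) (hist \<omega> x u n)))"] unfolding f by simp
  qed
  then show ?thesis unfolding D_at_hit_def hit by (simp add: D_eq_DL)
next
  case False
  then have hit: "hit \<omega> x u k = \<infinity>" unfolding hit_def by simp
  have "tu (\<lambda>y. y = k) (hist \<omega> x u n) = hist \<omega> x u n" for n
    unfolding tu_hist_eq using False by auto
  then show ?thesis unfolding D_at_hit_def hit by (simp add: D_eq_DL)
qed

lemma incseq_DLk:
  assumes om: "\<omega> \<in> Omega_plus"
  shows "incseq (\<lambda>n u. ennreal (DL \<omega> (tu (\<lambda>y. y = k) (hist \<omega> x u n))))"
proof (rule incseq_SucI, rule le_funI, rule ennreal_leI)
  fix n u
  have ne: "hist \<omega> x u n \<noteq> []" by simp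
  show "DL \<omega> (tu (\<lambda>y. y = k) (hist \<omega> x u n)) \<le> DL \<omega> (tu (\<lambda>y. y = k) (hist \<omega> x u (Suc n)))"
  proof (cases "\<exists>z\<in>set (hist \<omega> x u n). z = k")
    case True
    then show ?thesis unfolding hist_Suc'[of \<omega> x u n] tu_snoc by simp
  next
    case False
    then have "tu (\<lambda>y. y = k) (hist \<omega> x u n) = hist \<omega> x u n" by (intro tu_noB) auto
    then show ?thesis unfolding hist_Suc'[of \<omega> x u n] tu_snoc using False DL_append_mono[OF om] by simp
  qed
qed



lemma block:
  fixes a :: "nat \<Rightarrow> real"
  assumes a: "\<And>i. 0 \<le> a i" "\<And>i. a i \<le> 1" and c: "0 < c" and K: "0 < K"
    and part: "\<And>N. N0 \<le> N \<Longrightarrow> c * real N - B0 \<le> (\<Sum>i<N. a i)"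
  shows "\<exists>B>A. c / 4 \<le> (\<Sum>i\<in>{A..<B}. a i / (K + real i))"
proof -
  define q where "q = (4 * (\<bar>B0\<bar> + real A) + c * K) / (3 * c)"
  define B where "B = max N0 (max (A + 1) (nat \<lceil>q\<rceil>))"
  have BA: "A < B" unfolding B_def by simp
  have BN: "N0 \<le> B" unfolding B_def by simp
  have "nat \<lceil>q\<rceil> \<le> B" unfolding B_def by (meson max.cobounded2 max.coboundedI2)
  then have "real (nat \<lceil>q\<rceil>) \<le> real B" by (rule of_nat_mono)
  then have "q \<le> real B" using real_nat_ceiling_ge[of q] by linarith
  then have "q * (3 * c) \<le> real B * (3 * c)" using c by (intro mult_right_mono) auto
  also have "q * (3 * c) = 4 * (\<bar>B0\<bar> + real A) + c * K" unfolding q_def using c by simp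
  finally have Bbig: "4 * (\<bar>B0\<bar> + real A) + c * K \<le> 3 * (c * real B)" by (simp add: algebra_simps)
  have sA: "(\<Sum>i<A. a i) \<le> real A"
    using sum_mono[of "{..<A}" a "\<lambda>_. 1"] a by simp
  have split: "(\<Sum>i<B. a i) = (\<Sum>i<A. a i) + (\<Sum>i\<in>{A..<B}. a i)"
    using sum.atLeastLessThan_concat[of 0 A B a] BA by (simp add: atLeast0LessThan)
  have blk: "c * real B - B0 - real A \<le> (\<Sum>i\<in>{A..<B}. a i)"
    using part[OF BN] sA split by linarith
  have "(\<Sum>i\<in>{A..<B}. a i) / (K + real B) = (\<Sum>i\<in>{A..<B}. a i / (K + real B))"
    by (simp add: sum_divide_distrib)
  also have "\<dots> \<le> (\<Sum>i\<in>{A..<B}. a i / (K + real i))"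
  proof (rule sum_mono)
    fix i assume "i \<in> {A..<B}"
    then have "K + real i \<le> K + real B" by simp
    then show "a i / (K + real B) \<le> a i / (K + real i)"
      using a(1)[of i] K by (intro divide_left_mono) auto
  qed
  finally have f: "(\<Sum>i\<in>{A..<B}. a i) / (K + real B) \<le> (\<Sum>i\<in>{A..<B}. a i / (K + real i))" .
  have KB: "0 < K + real B" using K by simp
  have e4: "c / 4 * (K + real B) = (c * K) / 4 + (c * real B) / 4" by (simp add: algebra_simps)
  have "c / 4 * (K + real B) \<le> c * real B - B0 - real A" unfolding e4 using Bbig abs_ge_self[of B0] by argo
  then have "c / 4 * (K + real B) \<le> (\<Sum>i\<in>{A..<B}. a i)" using blk by linarith
  then have "c / 4 \<le> (\<Sum>i\<in>{A..<B}. a i) / (K + real B)" using KB by (simp add: le_divide_eq)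
  then show ?thesis using f BA by (meson order_trans)
qed

lemma diverge:
  fixes a :: "nat \<Rightarrow> real"
  assumes a: "\<And>i. 0 \<le> a i" "\<And>i. a i \<le> 1" and c: "0 < c" and K: "0 < K"
    and part: "\<And>N. N0 \<le> N \<Longrightarrow> c * real N - B0 \<le> (\<Sum>i<N. a i)"
  shows "\<exists>J. R \<le> (\<Sum>i<J. a i / (K + real i))"
proof -
  have t: "\<exists>J. real t * (c / 4) \<le> (\<Sum>i<J. a i / (K + real i))" for t
  proof (induction t)
    case 0 show ?case by (rule exI[of _ 0]) simp
  next
    case (Suc t)
    then obtain J where J: "real t * (c / 4) \<le> (\<Sum>i<J. a i / (K + real i))" by blast
    obtain B where B: "J < B" "c / 4 \<le> (\<Sum>i\<in>{J..<B}. a i / (K + real i))"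
      using block[OF a c K part] by blast
    have "(\<Sum>i<B. a i / (K + real i)) = (\<Sum>i<J. a i / (K + real i)) + (\<Sum>i\<in>{J..<B}. a i / (K + real i))"
      using sum.atLeastLessThan_concat[of 0 J B "\<lambda>i. a i / (K + real i)"] B(1) by (simp add: atLeast0LessThan)
    then show ?case using J B(2) by (intro exI[of _ B]) (simp add: algebra_simps)
  qed
  obtain t :: nat where "R / (c / 4) \<le> real t" using real_arch_simple by blast
  then have "R \<le> real t * (c / 4)" using c by (simp add: divide_le_eq)
  then show ?thesis using t[of t] by (meson order_trans)
qed



lemma liminf_extract:
  assumes "0 < liminf (\<lambda>i::nat. ereal ((1 / real i) * (\<Sum>y\<in>{- int i..0}. 2 * \<omega> y 1 - 1)))"
  obtains c i0 where "0 < c" "\<And>i. i0 \<le> i \<Longrightarrow> c * real i \<le> (\<Sum>y\<in>{- int i..0}. 2 * \<omega> y 1 - 1)"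
proof -
  obtain z where z: "0 < ereal z" "ereal z < liminf (\<lambda>i::nat. ereal ((1 / real i) * (\<Sum>y\<in>{- int i..0}. 2 * \<omega> y 1 - 1)))"
    using ereal_dense2[OF assms] by blast
  have "eventually (\<lambda>i. ereal z < ereal ((1 / real i) * (\<Sum>y\<in>{- int i..0}. 2 * \<omega> y 1 - 1))) sequentially"
    by (rule less_LiminfD[OF z(2)])
  then obtain i0 where i0: "\<And>i. i0 \<le> i \<Longrightarrow> z < (1 / real i) * (\<Sum>y\<in>{- int i..0}. 2 * \<omega> y 1 - 1)"
    unfolding eventually_sequentially by auto
  show ?thesis
  proof (rule that[of z "max i0 1"])
    show "0 < z" using z(1) by simp
    fix i assume i: "max i0 1 \<le> i"
    then have ip: "0 < real i" by simp
    have "z < (1 / real i) * (\<Sum>y\<in>{- int i..0}. 2 * \<omega> y 1 - 1)" using i0 i by simp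
    then have "z * real i < (\<Sum>y\<in>{- int i..0}. 2 * \<omega> y 1 - 1)" using ip by (simp add: field_simps)
    then show "z * real i \<le> (\<Sum>y\<in>{- int i..0}. 2 * \<omega> y 1 - 1)" by simp
  qed
qed

lemma sum_neg_reindex: "(\<Sum>y\<in>{- int i..0}. f y) = (\<Sum>j\<le>i. f (- int j))"
proof (rule sum.reindex_bij_witness[where i="\<lambda>j. - int j" and j="\<lambda>y. nat (- y)"])
qed auto

lemma Hf_rec:
  assumes "- int m \<le> x"
  shows "Hf \<omega> k (Suc m) x = (1 - 2 * \<omega> (- int m) 1 / real_of_int (k + int m + 1)) * Hf \<omega> k m x"
proof -
  have e: "{- int (Suc m) + 1..x} = insert (- int m) {- int m + 1..x}" using assms by auto
  show ?thesis unfolding Hf_def e by (subst prod.insert) auto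
qed

definition Q :: "env \<Rightarrow> int \<Rightarrow> int \<Rightarrow> nat \<Rightarrow> real" where
  "Q \<omega> k x m = real_of_int (k + int m) * Hf \<omega> k m x"

lemma Q_rec:
  assumes "- int m \<le> x" "0 < k + int m"
  shows "Q \<omega> k x (Suc m) = Q \<omega> k x m * (1 - (2 * \<omega> (- int m) 1 - 1) / real_of_int (k + int m))"
proof -
  have d: "0 < real_of_int (k + int m)" using assms(2) by simp
  have d1: "real_of_int (k + int (Suc m)) = real_of_int (k + int m + 1)" by simp
  have d2: "0 < real_of_int (k + int m + 1)" using assms(2) by simp
  show ?thesis unfolding Q_def Hf_rec[OF assms(1)] d1 using d d2 by (simp add: field_simps)
qed

lemma small_tail:
  assumes om: "\<omega> \<in> Omega_plus"
    and lim: "0 < liminf (\<lambda>i::nat. ereal ((1 / real i) * (\<Sum>y\<in>{- int i..0}. 2 * \<omega> y 1 - 1)))"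
    and xk: "x < k" and e: "0 < e"
  shows "\<exists>m. - int m < x \<and> real_of_int (k + int m) * Hf \<omega> k m x \<le> e"
proof -
  obtain c i0 where c: "0 < c" and ci: "\<And>i. i0 \<le> i \<Longrightarrow> c * real i \<le> (\<Sum>y\<in>{- int i..0}. 2 * \<omega> y 1 - 1)"
    using liminf_extract[of \<omega>, OF lim] by blast
  define dd where "dd j = 2 * \<omega> (- int j) 1 - 1" for j
  have dd: "0 \<le> dd j" "dd j \<le> 1" for j unfolding dd_def using om_bounds[OF om, of 1 "- int j"] by auto
  have pd: "c * real i \<le> (\<Sum>j<Suc i. dd j)" if "i0 \<le> i" for i
    using ci[OF that] unfolding sum_neg_reindex dd_def lessThan_Suc_atMost .
  define m0 where "m0 = nat (1 - x)"
  have m0: "1 - x \<le> int m0" unfolding m0_def by simp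
  define a where "a i = dd (i + m0)" for i
  have a: "0 \<le> a i" "a i \<le> 1" for i unfolding a_def using dd by auto
  define K where "K = real_of_int (k + int m0)"
  have K: "0 < K" unfolding K_def using m0 xk by simp
  have part: "c * real N - (c + real m0) \<le> (\<Sum>i<N. a i)" if N: "Suc i0 \<le> N" for N
  proof -
    have s1: "(\<Sum>i<N. a i) = (\<Sum>j\<in>{m0..<N + m0}. dd j)"
      unfolding a_def using sum.shift_bounds_nat_ivl[of dd 0 m0 N] by (simp add: atLeast0LessThan)
    have s2: "(\<Sum>j<N + m0. dd j) = (\<Sum>j<m0. dd j) + (\<Sum>j\<in>{m0..<N + m0}. dd j)"
      using sum.atLeastLessThan_concat[of 0 m0 "N + m0" dd] by (simp add: atLeast0LessThan)
    have s3: "(\<Sum>j<m0. dd j) \<le> real m0" using sum_mono[of "{..<m0}" dd "\<lambda>_. 1"] dd by simp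
    obtain p where p: "N + m0 = Suc p" using N by (cases "N + m0") auto
    have "c * real p \<le> (\<Sum>j<N + m0. dd j)" unfolding p by (rule pd) (use N p in simp)
    moreover have "real N - 1 \<le> real p" using p by simp
    then have "c * (real N - 1) \<le> c * real p" using c by (intro mult_left_mono) auto
    ultimately show ?thesis using s1 s2 s3 by (simp add: algebra_simps)
  qed
  have Qnn: "0 \<le> Q \<omega> k x (m0 + j)" for j
  proof -
    have "0 < k + int (m0 + j)" using m0 xk by simp
    then show ?thesis unfolding Q_def using Hf_nonneg[OF om xk, of "m0 + j"] by simp
  qed
  define S where "S j = (\<Sum>i<j. a i / (K + real i))" for j
  have Snn: "0 \<le> S j" for j unfolding S_def using a K by (intro sum_nonneg) auto
  have main: "Q \<omega> k x (m0 + j) * (1 + S j) \<le> Q \<omega> k x m0" for j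
  proof (induction j)
    case 0 then show ?case by (simp add: S_def)
  next
    case (Suc j)
    define t where "t = a j / (K + real j)"
    have t: "0 \<le> t" unfolding t_def using a K by simp
    have rec: "Q \<omega> k x (Suc (m0 + j)) = Q \<omega> k x (m0 + j) * (1 - t)"
    proof -
      have c1: "- int (m0 + j) \<le> x" using m0 by simp
      have c2: "0 < k + int (m0 + j)" using m0 xk by simp
      have "(2 * \<omega> (- int (m0 + j)) 1 - 1) / real_of_int (k + int (m0 + j)) = t"
        unfolding t_def a_def dd_def K_def by (simp add: add.commute)
      then show ?thesis using Q_rec[OF c1 c2, of \<omega>] by simp
    qed
    have SS: "S (Suc j) = S j + t" unfolding S_def t_def by simp
    have "(1 - t) * (1 + S j + t) \<le> 1 + S j"
    proof -
      have "(1 - t) * (1 + S j + t) = 1 + S j - t * S j - t * t" by (simp add: algebra_simps)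
      moreover have "0 \<le> t * S j" using t Snn[of j] by simp
      moreover have "0 \<le> t * t" by simp
      ultimately show ?thesis by linarith
    qed
    then have "Q \<omega> k x (m0 + j) * ((1 - t) * (1 + S j + t)) \<le> Q \<omega> k x (m0 + j) * (1 + S j)"
      using Qnn by (intro mult_left_mono) auto
    then have "Q \<omega> k x (m0 + Suc j) * (1 + S (Suc j)) \<le> Q \<omega> k x (m0 + j) * (1 + S j)"
      unfolding SS by (simp add: rec mult.assoc add.assoc)
    then show ?case using Suc.IH by linarith
  qed
  obtain J where J: "Q \<omega> k x m0 / e \<le> S J"
    using diverge[OF a c K part, where R="Q \<omega> k x m0 / e"] unfolding S_def by blast
  have "Q \<omega> k x m0 \<le> e * S J" using J e by (simp add: divide_le_eq mult.commute)
  also have "\<dots> \<le> e * (1 + S J)" using e by simp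
  finally have "Q \<omega> k x (m0 + J) * (1 + S J) \<le> e * (1 + S J)" using main[of J] by linarith
  then have "Q \<omega> k x (m0 + J) \<le> e" using Snn[of J] by (simp add: mult_le_cancel_right_pos add_pos_nonneg)
  moreover have "- int (m0 + J) < x" using m0 by simp
  ultimately show ?thesis unfolding Q_def by blast
qed



lemma tu_hist_self:
  assumes "\<And>y. B y \<longleftrightarrow> y = x"
  shows "tu B (hist \<omega> x u n) = [x]"
proof -
  have ne: "hist \<omega> x u n \<noteq> []" by simp
  then obtain t where "hist \<omega> x u n = x # t" using hd_hist[of \<omega> x u n] by (cases "hist \<omega> x u n") auto
  then show ?thesis using assms by simp
qed

theorem mainTheorem2:
  fixes \<omega> :: env and x k :: int
  assumes "\<omega> \<in> Omega_plus"
    and "0 < liminf (\<lambda>i::nat. ereal ((1 / real i) * (\<Sum>y\<in>{- int i..0}. 2 * \<omega> y 1 - 1)))"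
    and "x \<le> k"
  shows "(\<integral>\<^sup>+ u. D_at_hit \<omega> x u k \<partial>unif_seq) = ennreal (real_of_int (k - x))"
proof -
  note om = assms(1)
  let ?f = "\<lambda>n u. ennreal (DL \<omega> (tu (\<lambda>y. y = k) (hist \<omega> x u n)))"
  let ?A = "\<lambda>n. (\<integral>\<^sup>+ u. ?f n u \<partial>unif_seq)"
  let ?C = "\<lambda>n. (\<integral>\<^sup>+ u. ennreal (real_of_int (k - last (tu (\<lambda>y. y = k) (hist \<omega> x u n)))) \<partial>unif_seq)"
  let ?K = "ennreal (real_of_int (k - x))"
  have "(\<integral>\<^sup>+ u. D_at_hit \<omega> x u k \<partial>unif_seq) = (\<integral>\<^sup>+ u. (SUP n. ?f n u) \<partial>unif_seq)"
    by (rule nn_integral_cong) (simp add: D_at_hit_SUP[OF om])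
  also have "\<dots> = (SUP n. ?A n)"
    by (rule nn_integral_monotone_convergence_SUP[OF incseq_DLk[OF om]]) (rule hist_fun_meas)
  also have "\<dots> = ?K"
  proof (cases "x = k")
    case True
    have "?f n u = 0" for n u
    proof -
      have "tu (\<lambda>y. y = k) (hist \<omega> x u n) = [x]" by (rule tu_hist_self) (use True in simp)
      then show ?thesis by simp
    qed
    then show ?thesis using True by simp
  next
    case False
    then have xk: "x < k" using assms(3) by simp
    have B1: "(\<lambda>y. y = k) k" by simp
    have AC: "?A n + ?C n = ?K" for n
      by (rule mart[of \<omega> x k "\<lambda>y. y = k", OF om assms(3) B1])
    show ?thesis
    proof (rule antisym)
      show "(SUP n. ?A n) \<le> ?K"
      proof (rule SUP_least)
        fix n
        have "?A n \<le> ?A n + ?C n" by (rule add_increasing2) auto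
        then show "?A n \<le> ?K" unfolding AC .
      qed
      show "?K \<le> (SUP n. ?A n)"
      proof (rule ennreal_le_epsilon)
        fix e :: real assume e: "0 < e"
        obtain m where m: "- int m < x" "real_of_int (k + int m) * Hf \<omega> k m x \<le> e / 2"
          using small_tail[OF om assms(2) xk, of "e / 2"] e by auto
        define G0 where "G0 = real_of_int (k + int m) * gV k m x"
        define n where "n = Suc (nat \<lceil>G0 / (e / 2)\<rceil>)"
        have n: "0 < n" unfolding n_def by simp
        have "G0 / (e / 2) \<le> real n" unfolding n_def using real_nat_ceiling_ge[of "G0 / (e / 2)"] by simp
        then have "G0 \<le> e / 2 * real n" using e by (simp add: divide_le_eq mult.commute)
        then have t1: "real_of_int (k + int m) / real n * gV k m x \<le> e / 2"
          using n unfolding G0_def by (simp add: divide_le_eq mult.commute)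
        have "?K = ?A n + ?C n" by (rule AC[symmetric])
        also have "\<dots> \<le> (SUP n. ?A n) + ?C n" by (intro add_right_mono SUP_upper) simp
        also have "\<dots> \<le> (SUP n. ?A n) + (\<integral>\<^sup>+ u. ennreal (real_of_int (k - last (tu (Bm k m) (hist \<omega> x u n)))) \<partial>unif_seq)"
          by (intro add_left_mono compare[OF om xk m(1)])
        also have "\<dots> \<le> (SUP n. ?A n) + ennreal (real_of_int (k + int m) / real n * gV k m x + real_of_int (k + int m) * Hf \<omega> k m x)"
          by (intro add_left_mono bound_Bm[OF om xk m(1) n])
        also have "\<dots> \<le> (SUP n. ?A n) + ennreal e"
          using t1 m(2) by (intro add_left_mono ennreal_leI) linarith
        finally show "?K \<le> (SUP n. ?A n) + ennreal e" .
      qed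
    qed
  qed
  finally show ?thesis .
qed

end
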